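(* Let $G$ be a monomer graph, $G^p$ its polymer graph and $G^{*}$ its induced star-linking graph, all with the same initial node features (node $v^p_i$ of $G^p$ having the feature of $v_{i\bmod n}$). Consider a network composed of message passing layers and nodewise transformations, ending with a mean pooling. Then the output of the network on $G^p$ equals its output on $G^{*}$.
   Context: A monomer graph is $G=(V,E,\mathbf{X})$ with atoms $V=\{v_0,\dots,v_{n-1}\}$, bonds $E$, features $\mathbf{x}_i$ of $v_i$, and boundary atoms $v_0,v_{n-1}$. The polymer graph $G^p$ has nodes $v^p_i$, $i\in\mathbb{Z}$, with $v^p_i$ carrying the features of $v_{i\bmod n}$; its edges are $(v^p_{kn+a},v^p_{kn+b})$ for every $k\in\mathbb{Z}$ and every bond $(v_a,v_b)\in E$, plus $(v^p_{kn-1},v^p_{kn})$ for every $k\in\mathbb{Z}$. The induced star-linking graph $G^*$ has node set $V$, edge set $E\cup\{(v_0,v_{n-1})\}$ and the same features. A message passing layer updates all node features simultaneously by $\mathbf{x}_v\gets\mathrm{UPDATE}(\mathbf{x}_v,\mathrm{AGG}(\{\mathbf{x}_u\}_{u\in\mathcal{N}(v)}))$ with fixed functions UPDATE, AGG ($\mathcal{N}(v)$ the neighbors of $v$). A nodewise transformation applies a fixed function to each node feature independently. The layers are applied identically on both graphs. Node features on $G^p$ remain $n$-periodic in the index, and mean pooling on $G^p$ means the average of the node features over one period $v^p_0,\dots,v^p_{n-1}$; on $G^*$ it is the average over all $n$ nodes. *)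

theory Defs
  imports "HOL-Analysis.Analysis" "HOL-Library.Multiset"
begin

text \<open>A monomer graph has atoms 0..n-1 (boundary atoms 0 and n-1), a finite set E of
  bonds (pairs of atom indices, each read as an undirected bond) and features X i.\<close>

definition polymer_edges :: "nat \<Rightarrow> (nat \<times> nat) set \<Rightarrow> (int \<times> int) set" where
  "polymer_edges n E =
     {(k * int n + int a, k * int n + int b) | k a b. (a, b) \<in> E}
     \<union> {(k * int n - 1, k * int n) | k. True}"

text \<open>Neighbor multiset of a node in a graph given by a set of (undirected) edges:
  each incident edge contributes its other endpoint (a self loop contributes twice).\<close>
definition nbrs_set :: "('v \<times> 'v) set \<Rightarrow> 'v \<Rightarrow> 'v multiset" where
  "nbrs_set Ed v =
     image_mset snd (mset_set {e \<in> Ed. fst e = v}) + image_mset fst (mset_set {e \<in> Ed. snd e = v})"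

text \<open>Induced star-linking graph: edges E plus the linking edge (v_0, v_{n-1}),
  kept as a multiset (the linking bond is added as a new bond).\<close>
definition star_edges :: "nat \<Rightarrow> (nat \<times> nat) set \<Rightarrow> (nat \<times> nat) multiset" where
  "star_edges n E = mset_set E + {#(0, n - 1)#}"

definition nbrs_mset :: "('v \<times> 'v) multiset \<Rightarrow> 'v \<Rightarrow> 'v multiset" where
  "nbrs_mset Ed v =
     image_mset snd (filter_mset (\<lambda>e. fst e = v) Ed) + image_mset fst (filter_mset (\<lambda>e. snd e = v) Ed)"

text \<open>Layers: a message passing layer (UPDATE, AGG) or a nodewise transformation.\<close>
datatype ('f, 'a) layer =
    MP "'f \<Rightarrow> 'a \<Rightarrow> 'f" "'f multiset \<Rightarrow> 'a"
  | NW "'f \<Rightarrow> 'f"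

fun apply_layer :: "('v \<Rightarrow> 'v multiset) \<Rightarrow> ('f, 'a) layer \<Rightarrow> ('v \<Rightarrow> 'f) \<Rightarrow> ('v \<Rightarrow> 'f)" where
  "apply_layer N (MP upd agg) X = (\<lambda>v. upd (X v) (agg (image_mset X (N v))))"
| "apply_layer N (NW f) X = (\<lambda>v. f (X v))"

fun run_layers :: "('v \<Rightarrow> 'v multiset) \<Rightarrow> ('f, 'a) layer list \<Rightarrow> ('v \<Rightarrow> 'f) \<Rightarrow> ('v \<Rightarrow> 'f)" where
  "run_layers N [] X = X"
| "run_layers N (l # ls) X = run_layers N ls (apply_layer N l X)"

definition polymer_output ::
  "nat \<Rightarrow> (nat \<times> nat) set \<Rightarrow> (nat \<Rightarrow> 'f::real_vector) \<Rightarrow> ('f, 'a) layer list \<Rightarrow> 'f" where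
  "polymer_output n E X ls =
     (let Y = run_layers (nbrs_set (polymer_edges n E)) ls (\<lambda>i. X (nat (i mod int n)))
      in (1 / real n) *\<^sub>R (\<Sum>i<n. Y (int i)))"

definition star_output ::
  "nat \<Rightarrow> (nat \<times> nat) set \<Rightarrow> (nat \<Rightarrow> 'f::real_vector) \<Rightarrow> ('f, 'a) layer list \<Rightarrow> 'f" where
  "star_output n E X ls =
     (let Y = run_layers (nbrs_mset (star_edges n E)) ls X
      in (1 / real n) *\<^sub>R (\<Sum>i<n. Y i))"

end

theory Submission
  imports Defs
begin

lemma dm_div: "0 \<le> a \<Longrightarrow> a < int n \<Longrightarrow> (k * int n + a) div int n = k"
  by (simp add: div_add1_eq)
lemma dm_mod: "0 \<le> a \<Longrightarrow> a < int n \<Longrightarrow> (k * int n + a) mod int n = a"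
  by (simp add: mod_add_left_eq [symmetric])

lemma eq_period:
  assumes "0 \<le> a" "a < int n" "0 \<le> b" "b < int n" "k * int n + a = k' * int n + b"
  shows "k = k' \<and> a = b"
  using dm_div[OF assms(1,2), of k] dm_div[OF assms(3,4), of k'] dm_mod[OF assms(1,2), of k]
    dm_mod[OF assms(3,4), of k'] assms(5) by simp

lemma set_fst:
  assumes n: "n \<ge> 1" and E: "E \<subseteq> {..<n} \<times> {..<n}" and j: "j < n"
  shows "{e \<in> polymer_edges n E. fst e = k * int n + int j} =
     (\<lambda>(a,b). (k * int n + int a, k * int n + int b)) ` {e \<in> E. fst e = j}
     \<union> (if j = n - 1 then {(k * int n + int j, k * int n + int j + 1)} else {})"
proof (rule set_eqI)
  fix e :: "int \<times> int"
  show "e \<in> {e \<in> polymer_edges n E. fst e = k * int n + int j} \<longleftrightarrow>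
     e \<in> (\<lambda>(a,b). (k * int n + int a, k * int n + int b)) ` {e \<in> E. fst e = j}
     \<union> (if j = n - 1 then {(k * int n + int j, k * int n + int j + 1)} else {})"
  proof
    assume "e \<in> {e \<in> polymer_edges n E. fst e = k * int n + int j}"
    then have fe: "fst e = k * int n + int j" and "e \<in> polymer_edges n E" by auto
    then consider (b) k' a b where "(a,b) \<in> E" "e = (k' * int n + int a, k' * int n + int b)"
      | (l) k' where "e = (k' * int n - 1, k' * int n)"
      unfolding polymer_edges_def by blast
    then show "e \<in> (\<lambda>(a,b). (k * int n + int a, k * int n + int b)) ` {e \<in> E. fst e = j}
     \<union> (if j = n - 1 then {(k * int n + int j, k * int n + int j + 1)} else {})"
    proof cases
      case (b k' a b)
      with E have "a < n" by auto
      with b fe j eq_period[of "int a" n "int j" k' k] have "k' = k" "a = j" by auto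
      with b show ?thesis by force
    next
      case (l k')
      have "(k' - 1) * int n + (int n - 1) = k * int n + int j"
        using l fe by (simp add: algebra_simps)
      with eq_period[of "int n - 1" n "int j" "k' - 1" k] j n
      have k': "k' - 1 = k" and jn: "int n - 1 = int j" by auto
      then have "j = n - 1" by linarith
      have "k' * int n = k * int n + int n" using k' by (metis add.commute diff_add_cancel distrib_right mult_1)
      then have "e = (k * int n + int j, k * int n + int j + 1)" using l jn by simp
      with \<open>j = n - 1\<close> show ?thesis by simp
    qed
  next
    assume "e \<in> (\<lambda>(a,b). (k * int n + int a, k * int n + int b)) ` {e \<in> E. fst e = j}
     \<union> (if j = n - 1 then {(k * int n + int j, k * int n + int j + 1)} else {})"
    then show "e \<in> {e \<in> polymer_edges n E. fst e = k * int n + int j}"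
    proof
      assume "e \<in> (\<lambda>(a,b). (k * int n + int a, k * int n + int b)) ` {e \<in> E. fst e = j}"
      then show ?thesis unfolding polymer_edges_def by auto
    next
      assume h: "e \<in> (if j = n - 1 then {(k * int n + int j, k * int n + int j + 1)} else {})"
      then have "j = n - 1" by (auto split: if_splits)
      with h n have e: "e = ((k+1) * int n - 1, (k+1) * int n)" by (auto simp: algebra_simps)
      have eq: "(k+1)*int n - 1 = k*int n + int j" using \<open>j = n - 1\<close> n by (simp add: distrib_right of_nat_diff)
      have "e \<in> {(k*int n - 1, k*int n)|k. True}" using e by blast
      then have "e \<in> polymer_edges n E" unfolding polymer_edges_def by blast
      moreover have "fst e = k * int n + int j" using e eq by simp
      ultimately show ?thesis by simp
    qed
  qed
qed

lemma set_snd: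
  assumes n: "n \<ge> 1" and E: "E \<subseteq> {..<n} \<times> {..<n}" and j: "j < n"
  shows "{e \<in> polymer_edges n E. snd e = k * int n + int j} =
     (\<lambda>(a,b). (k * int n + int a, k * int n + int b)) ` {e \<in> E. snd e = j}
     \<union> (if j = 0 then {(k * int n - 1, k * int n)} else {})"
proof (rule set_eqI)
  fix e :: "int \<times> int"
  show "e \<in> {e \<in> polymer_edges n E. snd e = k * int n + int j} \<longleftrightarrow>
     e \<in> (\<lambda>(a,b). (k * int n + int a, k * int n + int b)) ` {e \<in> E. snd e = j}
     \<union> (if j = 0 then {(k * int n - 1, k * int n)} else {})"
  proof
    assume "e \<in> {e \<in> polymer_edges n E. snd e = k * int n + int j}"
    then have fe: "snd e = k * int n + int j" and "e \<in> polymer_edges n E" by auto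
    then consider (b) k' a b where "(a,b) \<in> E" "e = (k' * int n + int a, k' * int n + int b)"
      | (l) k' where "e = (k' * int n - 1, k' * int n)"
      unfolding polymer_edges_def by blast
    then show "e \<in> (\<lambda>(a,b). (k * int n + int a, k * int n + int b)) ` {e \<in> E. snd e = j}
     \<union> (if j = 0 then {(k * int n - 1, k * int n)} else {})"
    proof cases
      case (b k' a b)
      with E have "b < n" by auto
      with b fe j eq_period[of "int b" n "int j" k' k] have "k' = k" "b = j" by auto
      with b show ?thesis by force
    next
      case (l k')
      have "k' * int n + 0 = k * int n + int j"
        using l fe by (simp add: algebra_simps)
      with eq_period[of 0 n "int j" "k'" k] j n
      have "k' = k" "j = 0" by auto
      with l show ?thesis by simp
    qed
  next
    assume "e \<in> (\<lambda>(a,b). (k * int n + int a, k * int n + int b)) ` {e \<in> E. snd e = j}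
     \<union> (if j = 0 then {(k * int n - 1, k * int n)} else {})"
    then show "e \<in> {e \<in> polymer_edges n E. snd e = k * int n + int j}"
    proof
      assume "e \<in> (\<lambda>(a,b). (k * int n + int a, k * int n + int b)) ` {e \<in> E. snd e = j}"
      then show ?thesis unfolding polymer_edges_def by auto
    next
      assume h: "e \<in> (if j = 0 then {(k * int n - 1, k * int n)} else {})"
      then show ?thesis unfolding polymer_edges_def by (auto split: if_splits)
    qed
  qed
qed


lemma mset_part:
  assumes fin: "finite A" and inj: "inj_on f A" and dis: "f ` A \<inter> L = {}" and finL: "finite L"
    and cong: "\<And>e. e \<in> A \<Longrightarrow> g (f e) = h e"
  shows "image_mset g (mset_set (f ` A \<union> L)) = image_mset h (mset_set A) + image_mset g (mset_set L)"
proof -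
  have "mset_set (f ` A \<union> L) = mset_set (f ` A) + mset_set L"
    using fin finL dis by (simp add: mset_set_Union)
  moreover have "mset_set (f ` A) = image_mset f (mset_set A)"
    using image_mset_mset_set[OF inj] by simp
  moreover have "image_mset g (image_mset f (mset_set A)) = image_mset h (mset_set A)"
    unfolding multiset.map_comp using cong fin by (intro image_mset_cong) (simp add: o_def)
  ultimately show ?thesis by simp
qed

lemma key:
  assumes n: "n \<ge> 1" and E: "E \<subseteq> {..<n} \<times> {..<n}"
  shows "image_mset (\<lambda>i. Z (nat (i mod int n))) (nbrs_set (polymer_edges n E) i)
       = image_mset Z (nbrs_mset (star_edges n E) (nat (i mod int n)))"
proof -
  define k where "k = i div int n"
  define j where "j = nat (i mod int n)"
  have j: "j < n" using n unfolding j_def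
    by (metis Euclidean_Rings.pos_mod_bound Euclidean_Rings.pos_mod_sign less_le_trans nat_less_iff of_nat_0_less_iff zero_less_one)
  have i: "i = k * int n + int j" using n unfolding k_def j_def by simp
  let ?Y = "\<lambda>i. Z (nat (i mod int n))"
  let ?f = "\<lambda>(a,b). (k * int n + int a, k * int n + int b)"
  have finE: "finite E" using E by (meson finite_SigmaI finite_lessThan finite_subset)
  have inj: "inj_on ?f A" for A by (auto simp: inj_on_def)
  have Ymod: "?Y (k * int n + int b) = Z b" if "b < n" for b
    using dm_mod[of "int b" n k] that by simp
  have PEfst: "image_mset ?Y (image_mset snd (mset_set {e \<in> polymer_edges n E. fst e = i}))
     = image_mset (Z \<circ> snd) (mset_set {e \<in> E. fst e = j}) + (if j = n - 1 then {#Z 0#} else {#})"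
  proof -
    have dis: "?f ` {e \<in> E. fst e = j} \<inter> (if j = n - 1 then {(k * int n + int j, k * int n + int j + 1)} else {}) = {}"
    proof (cases "j = n - 1")
      case True
      { fix a b assume ab: "(a,b) \<in> E" "(k * int n + int a, k * int n + int b) = (k * int n + int j, k * int n + int j + 1)"
        then have "b = j + 1" by simp
        with True n ab E have False by auto }
      then show ?thesis by auto
    qed simp
    have "image_mset (?Y \<circ> snd) (mset_set {e \<in> polymer_edges n E. fst e = i})
       = image_mset (Z \<circ> snd) (mset_set {e \<in> E. fst e = j})
         + image_mset (?Y \<circ> snd) (mset_set (if j = n - 1 then {(k * int n + int j, k * int n + int j + 1)} else {}))"
      unfolding i set_fst[OF n E j]
      apply (rule mset_part)
      using finE dis E Ymod inj by auto
    moreover have "?Y (k * int n + int j + 1) = Z 0" if "j = n - 1"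
    proof -
      have "k * int n + int j + 1 = (k + 1) * int n + 0" using that n by (simp add: distrib_right of_nat_diff)
      then show ?thesis using dm_mod[of 0 n "k+1"] n by simp
    qed
    ultimately show ?thesis by (simp add: multiset.map_comp)
  qed
  have PEsnd: "image_mset ?Y (image_mset fst (mset_set {e \<in> polymer_edges n E. snd e = i}))
     = image_mset (Z \<circ> fst) (mset_set {e \<in> E. snd e = j}) + (if j = 0 then {#Z (n - 1)#} else {#})"
  proof -
    have dis: "?f ` {e \<in> E. snd e = j} \<inter> (if j = 0 then {(k * int n - 1, k * int n)} else {}) = {}"
    proof (cases "j = 0")
      case True
      { fix a b assume ab: "(a,b) \<in> E" "(k * int n + int a, k * int n + int b) = (k * int n - 1, k * int n)"
        then have False by simp }
      then show ?thesis by auto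
    qed simp
    have Ymod1: "?Y (k * int n + int a) = Z a" if "(a, b) \<in> E" for a b
      using Ymod that E by auto
    have "image_mset (?Y \<circ> fst) (mset_set {e \<in> polymer_edges n E. snd e = i})
       = image_mset (Z \<circ> fst) (mset_set {e \<in> E. snd e = j})
         + image_mset (?Y \<circ> fst) (mset_set (if j = 0 then {(k * int n - 1, k * int n)} else {}))"
      unfolding i set_snd[OF n E j]
      apply (rule mset_part)
      using finE dis Ymod1 inj by auto
    moreover have "?Y (k * int n - 1) = Z (n - 1)"
    proof -
      have "k * int n - 1 = (k - 1) * int n + int (n - 1)" using n by (simp add: left_diff_distrib of_nat_diff)
      then have "(k * int n - 1) mod int n = ((k - 1) * int n + int (n - 1)) mod int n" by (simp only:)
      also have "\<dots> = int (n - 1)" using dm_mod[of "int (n - 1)" n "k - 1"] n by simp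
      finally show ?thesis by (simp only: nat_int)
    qed
    ultimately show ?thesis using i by (simp add: multiset.map_comp)
  qed
  have ST: "image_mset Z (nbrs_mset (star_edges n E) j)
     = image_mset (Z \<circ> snd) (mset_set {e \<in> E. fst e = j}) + (if j = 0 then {#Z (n - 1)#} else {#})
     + image_mset (Z \<circ> fst) (mset_set {e \<in> E. snd e = j}) + (if j = n - 1 then {#Z 0#} else {#})"
    unfolding nbrs_mset_def star_edges_def using finE by (auto simp: multiset.map_comp)
  show ?thesis
    unfolding nbrs_set_def image_mset_union PEfst PEsnd ST j_def[symmetric]
    by (simp add: ac_simps)
qed


lemma run_periodic:
  assumes n: "n \<ge> 1" and E: "E \<subseteq> {..<n} \<times> {..<n}"
  shows "run_layers (nbrs_set (polymer_edges n E)) ls (\<lambda>i. Z (nat (i mod int n)))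
       = (\<lambda>i. run_layers (nbrs_mset (star_edges n E)) ls Z (nat (i mod int n)))"
proof (induction ls arbitrary: Z)
  case Nil
  then show ?case by simp
next
  case (Cons l ls)
  show ?case
  proof (cases l)
    case (MP upd agg)
    have "apply_layer (nbrs_set (polymer_edges n E)) l (\<lambda>i. Z (nat (i mod int n)))
       = (\<lambda>i. apply_layer (nbrs_mset (star_edges n E)) l Z (nat (i mod int n)))"
      unfolding MP by (rule ext) (simp add: key[OF n E])
    then show ?thesis using Cons.IH by simp
  next
    case (NW f)
    have "apply_layer (nbrs_set (polymer_edges n E)) l (\<lambda>i. Z (nat (i mod int n)))
       = (\<lambda>i. apply_layer (nbrs_mset (star_edges n E)) l Z (nat (i mod int n)))"
      unfolding NW by (rule ext) simp
    then show ?thesis using Cons.IH by simp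
  qed
qed

theorem theorem1:
  fixes n :: nat and E :: "(nat \<times> nat) set" and X :: "nat \<Rightarrow> 'f::real_vector"
    and ls :: "('f, 'a) layer list"
  assumes "n \<ge> 1"
    and "E \<subseteq> {..<n} \<times> {..<n}"
  shows "polymer_output n E X ls = star_output n E X ls"
proof -
  have "(\<Sum>i<n. run_layers (nbrs_set (polymer_edges n E)) ls (\<lambda>i. X (nat (i mod int n))) (int i))
      = (\<Sum>i<n. run_layers (nbrs_mset (star_edges n E)) ls X i)"
    unfolding run_periodic[OF assms]
    by (rule sum.cong) (auto simp: zmod_int)
  then show ?thesis unfolding polymer_output_def star_output_def Let_def by simp
qed

end
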